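(* Let $R$, $G$, $*$, $\sigma$ and $\mathcal{S}$ be as in the context, and suppose $\mathcal{S}$ is anticommutative. Let $y\in G_*$, $x\in G\setminus G_*$, and $\alpha\in R$ with $\alpha y\in\mathcal{S}$. Then: - (i) $x^y\in\{x,x^*\}$; - (ii) $xy\in G_*$ if and only if $xy\neq yx$; - (iii) if $xy\neq yx$, then $\alpha(1+\sigma(x))=0$; if $xy=yx$, then $2\alpha=0$; - (iv) $(x,y^2)=(x^2,y)=(xx^*,y)=1$.
   Context: Throughout, $R$ is a commutative ring with unity with $\operatorname{char}(R)\neq 2$, and $\mathcal{U}(R)$ is its unit group. $G$ is a group with an involution $*$, i.e. a map $x\mapsto x^*$ with $(xy)^*=y^*x^*$ and $(x^* )^*=x$. The map $\sigma:G\to\mathcal{U}(R)$ is a nontrivial group homomorphism with kernel $N=\ker\sigma$, and it is compatible with $*$: $xx^*\in N$ for all $x\in G$. The group ring $RG$ carries the involution $\left(\sum_{x\in G}\alpha_x x\right)^{\sigma*}=\sum_{x\in G}\sigma(x)\alpha_x x^*$. Write $G_*=\{x\in G: x^*=x\}$ and $N_*=G_*\cap N$. Let $\mathcal{S}$ be the $R$-submodule of $RG$ spanned by the union of the following three sets: - $2\mathcal{S}_1=\{2x: x\in N_*\}$; - $\mathcal{S}_2=\{\alpha x: x\in G_*\setminus N,\ \alpha\in R,\ \alpha(1-\sigma(x))=0\}$; - $\mathcal{S}_3=\{x+\sigma(x)x^*: x\in G\setminus G_*\}$. $\mathcal{S}$ is called anticommutative if $ab+ba=0$ for all $a,b\in\mathcal{S}$.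 The conjugate of $x$ by $y$ is $x^y=y^{-1}xy$, and the commutator is $(x,y)=x^{-1}y^{-1}xy$. *)

theory Defs
  imports "HOL-Algebra.Group"
begin

text \<open>Group ring elements of RG are represented as finitely supported functions
  carrier G \<rightarrow> R (zero outside the carrier); only the multiplication and the
  R-submodule S are needed.\<close>

definition gr_basis :: "('g, 'm) monoid_scheme \<Rightarrow> 'g \<Rightarrow> 'r::comm_ring_1 \<Rightarrow> 'g \<Rightarrow> 'r" where
  "gr_basis G x \<alpha> = (\<lambda>z. if z = x then \<alpha> else 0)"

definition gr_mult :: "('g, 'm) monoid_scheme \<Rightarrow> ('g \<Rightarrow> 'r::comm_ring_1) \<Rightarrow> ('g \<Rightarrow> 'r) \<Rightarrow> 'g \<Rightarrow> 'r" where
  "gr_mult G a b = (\<lambda>z. if z \<in> carrier G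
      then (\<Sum>x\<in>{x\<in>carrier G. a x \<noteq> 0}. a x * b (inv\<^bsub>G\<^esub> x \<otimes>\<^bsub>G\<^esub> z)) else 0)"

inductive_set rspan :: "('g \<Rightarrow> 'r::comm_ring_1) set \<Rightarrow> ('g \<Rightarrow> 'r) set" for A where
  zero: "(\<lambda>_. 0) \<in> rspan A"
| step: "a \<in> A \<Longrightarrow> b \<in> rspan A \<Longrightarrow> (\<lambda>z. r * a z + b z) \<in> rspan A"

definition involution_on :: "('g, 'm) monoid_scheme \<Rightarrow> ('g \<Rightarrow> 'g) \<Rightarrow> bool" where
  "involution_on G star \<longleftrightarrow> (\<forall>x\<in>carrier G. star x \<in> carrier G \<and> star (star x) = x) \<and>
     (\<forall>x\<in>carrier G. \<forall>y\<in>carrier G. star (x \<otimes>\<^bsub>G\<^esub> y) = star y \<otimes>\<^bsub>G\<^esub> star x)"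

definition unit_hom :: "('g, 'm) monoid_scheme \<Rightarrow> ('g \<Rightarrow> 'r::comm_ring_1) \<Rightarrow> bool" where
  "unit_hom G \<sigma> \<longleftrightarrow> (\<forall>x\<in>carrier G. \<sigma> x dvd 1) \<and>
     (\<forall>x\<in>carrier G. \<forall>y\<in>carrier G. \<sigma> (x \<otimes>\<^bsub>G\<^esub> y) = \<sigma> x * \<sigma> y)"

definition Gstar :: "('g, 'm) monoid_scheme \<Rightarrow> ('g \<Rightarrow> 'g) \<Rightarrow> 'g set" where
  "Gstar G star = {x\<in>carrier G. star x = x}"

definition kerN :: "('g, 'm) monoid_scheme \<Rightarrow> ('g \<Rightarrow> 'r::comm_ring_1) \<Rightarrow> 'g set" where
  "kerN G \<sigma> = {x\<in>carrier G. \<sigma> x = 1}"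

definition S_gens :: "('g, 'm) monoid_scheme \<Rightarrow> ('g \<Rightarrow> 'g) \<Rightarrow> ('g \<Rightarrow> 'r::comm_ring_1) \<Rightarrow> ('g \<Rightarrow> 'r) set" where
  "S_gens G star \<sigma> =
     {gr_basis G x 2 | x. x \<in> Gstar G star \<inter> kerN G \<sigma>}
   \<union> {gr_basis G x \<alpha> | x \<alpha>. x \<in> Gstar G star - kerN G \<sigma> \<and> \<alpha> * (1 - \<sigma> x) = 0}
   \<union> {(\<lambda>z. gr_basis G x 1 z + gr_basis G (star x) (\<sigma> x) z) | x. x \<in> carrier G - Gstar G star}"

definition S_mod :: "('g, 'm) monoid_scheme \<Rightarrow> ('g \<Rightarrow> 'g) \<Rightarrow> ('g \<Rightarrow> 'r::comm_ring_1) \<Rightarrow> ('g \<Rightarrow> 'r) set" where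
  "S_mod G star \<sigma> = rspan (S_gens G star \<sigma>)"

definition anticommutative :: "('g, 'm) monoid_scheme \<Rightarrow> ('g \<Rightarrow> 'r::comm_ring_1) set \<Rightarrow> bool" where
  "anticommutative G S \<longleftrightarrow> (\<forall>a\<in>S. \<forall>b\<in>S. (\<lambda>z. gr_mult G a b z + gr_mult G b a z) = (\<lambda>_. 0))"

definition conjg :: "('g, 'm) monoid_scheme \<Rightarrow> 'g \<Rightarrow> 'g \<Rightarrow> 'g" where
  "conjg G x y = inv\<^bsub>G\<^esub> y \<otimes>\<^bsub>G\<^esub> x \<otimes>\<^bsub>G\<^esub> y"

definition commg :: "('g, 'm) monoid_scheme \<Rightarrow> 'g \<Rightarrow> 'g \<Rightarrow> 'g" where
  "commg G x y = inv\<^bsub>G\<^esub> x \<otimes>\<^bsub>G\<^esub> inv\<^bsub>G\<^esub> y \<otimes>\<^bsub>G\<^esub> x \<otimes>\<^bsub>G\<^esub> y"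

end

theory Submission imports Defs begin

locale ac = group G for G :: "('g, 'm) monoid_scheme" (structure) +
  fixes star :: "'g \<Rightarrow> 'g" and \<sigma> :: "'g \<Rightarrow> 'r::comm_ring_1"
  assumes two: "(2::'r) \<noteq> 0" and invo: "involution_on G star"
    and hom: "unit_hom G \<sigma>" and anti: "anticommutative G (S_mod G star \<sigma>)"
begin

lemma star_closed[simp]: "x \<in> carrier G \<Longrightarrow> star x \<in> carrier G"
  using invo by (simp add: involution_on_def)
lemma star_star[simp]: "x \<in> carrier G \<Longrightarrow> star (star x) = x"
  using invo by (simp add: involution_on_def)
lemma star_mult: "x \<in> carrier G \<Longrightarrow> y \<in> carrier G \<Longrightarrow> star (x \<otimes> y) = star y \<otimes> star x"
  using invo by (simp add: involution_on_def)
lemma sig_mult: "x \<in> carrier G \<Longrightarrow> y \<in> carrier G \<Longrightarrow> \<sigma> (x \<otimes> y) = \<sigma> x * \<sigma> y"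
  using hom by (simp add: unit_hom_def)
lemma sig_unit: "x \<in> carrier G \<Longrightarrow> \<sigma> x dvd 1"
  using hom by (simp add: unit_hom_def)
lemma unit_cancel: assumes "x \<in> carrier G" "c * \<sigma> x = 0" shows "c = 0"
proof -
  obtain k where "1 = \<sigma> x * k" using sig_unit[OF assms(1)] by (auto elim: dvdE)
  then have "c = c * \<sigma> x * k" by (simp add: mult.assoc)
  with assms(2) show ?thesis by simp
qed
lemma one_nz: "(1::'r) \<noteq> 0" using two by (metis mult_zero_left one_add_one distrib_right mult_1 add_0)

lemma gr_mult_fin:
  assumes "finite F" "F \<subseteq> carrier G" "\<forall>x\<in>carrier G - F. a x = 0" "z \<in> carrier G"
  shows "gr_mult G a b z = (\<Sum>x\<in>F. a x * b (inv x \<otimes> z))"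
proof -
  have sub: "{x\<in>carrier G. a x \<noteq> 0} \<subseteq> F" using assms(3) by blast
  have "(\<Sum>x\<in>{x\<in>carrier G. a x \<noteq> 0}. a x * b (inv x \<otimes> z)) = (\<Sum>x\<in>F. a x * b (inv x \<otimes> z))"
    by (rule sum.mono_neutral_left[OF assms(1) sub]) (use assms(2) in auto)
  then show ?thesis using assms(4) by (simp add: gr_mult_def)
qed

lemma mult_basis:
  assumes "g \<in> carrier G" "z \<in> carrier G"
  shows "gr_mult G (gr_basis G g c) b z = c * b (inv g \<otimes> z)"
  using gr_mult_fin[of "{g}" "gr_basis G g c" z b] assms by (simp add: gr_basis_def)

lemma mult_pair:
  assumes "g \<in> carrier G" "h \<in> carrier G" "g \<noteq> h" "z \<in> carrier G"
  shows "gr_mult G (\<lambda>z. gr_basis G g c z + gr_basis G h d z) b z = c * b (inv g \<otimes> z) + d * b (inv h \<otimes> z)"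
  using gr_mult_fin[of "{g,h}" "\<lambda>z. gr_basis G g c z + gr_basis G h d z" z b] assms
  by (simp add: gr_basis_def)

definition s :: "'g \<Rightarrow> 'g \<Rightarrow> 'r" where
  "s u = (\<lambda>z. gr_basis G u 1 z + gr_basis G (star u) (\<sigma> u) z)"

lemma gen_in: "a \<in> S_gens G star \<sigma> \<Longrightarrow> a \<in> S_mod G star \<sigma>"
  unfolding S_mod_def using rspan.step[OF _ rspan.zero, of a _ 1] by simp

lemma s_in: "u \<in> carrier G \<Longrightarrow> star u \<noteq> u \<Longrightarrow> s u \<in> S_mod G star \<sigma>"
  by (rule gen_in) (auto simp: S_gens_def Gstar_def s_def)

lemma b_in: "w \<in> carrier G \<Longrightarrow> star w = w \<Longrightarrow> \<sigma> w \<noteq> 1 \<Longrightarrow> \<beta> * (1 - \<sigma> w) = 0 \<Longrightarrow> gr_basis G w \<beta> \<in> S_mod G star \<sigma>"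
  by (rule gen_in) (auto simp: S_gens_def Gstar_def kerN_def)

lemma AC: "a \<in> S_mod G star \<sigma> \<Longrightarrow> b \<in> S_mod G star \<sigma> \<Longrightarrow> gr_mult G a b z + gr_mult G b a z = 0"
  using anti unfolding anticommutative_def by (metis (no_types, lifting))

lemma eqinv: "g \<in> carrier G \<Longrightarrow> h \<in> carrier G \<Longrightarrow> z \<in> carrier G \<Longrightarrow> (inv g \<otimes> z = h) = (z = g \<otimes> h)"
  by (rule inv_solve_left')

lemma prod_ss:
  assumes "u \<in> carrier G" "v \<in> carrier G" "star u \<noteq> u" "star v \<noteq> v" "z \<in> carrier G"
  shows "gr_mult G (s u) (s v) z = (if z = u \<otimes> v then 1 else 0) + (if z = u \<otimes> star v then \<sigma> v else 0)
     + \<sigma> u * ((if z = star u \<otimes> v then 1 else 0) + (if z = star u \<otimes> star v then \<sigma> v else 0))"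
proof -
  have "gr_mult G (s u) (s v) z = 1 * s v (inv u \<otimes> z) + \<sigma> u * s v (inv (star u) \<otimes> z)"
    unfolding s_def[of u] using assms by (intro mult_pair) auto
  then show ?thesis using assms by (simp add: s_def gr_basis_def eqinv)
qed

lemma prod_sb:
  assumes "u \<in> carrier G" "w \<in> carrier G" "star u \<noteq> u" "z \<in> carrier G"
  shows "gr_mult G (s u) (gr_basis G w \<beta>) z = (if z = u \<otimes> w then \<beta> else 0) + \<sigma> u * (if z = star u \<otimes> w then \<beta> else 0)"
proof -
  have "gr_mult G (s u) (gr_basis G w \<beta>) z = 1 * gr_basis G w \<beta> (inv u \<otimes> z) + \<sigma> u * gr_basis G w \<beta> (inv (star u) \<otimes> z)"
    unfolding s_def[of u] using assms by (intro mult_pair) auto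
  then show ?thesis using assms by (simp add: gr_basis_def eqinv)
qed

lemma prod_bs:
  assumes "u \<in> carrier G" "w \<in> carrier G" "z \<in> carrier G"
  shows "gr_mult G (gr_basis G w \<beta>) (s u) z = \<beta> * ((if z = w \<otimes> u then 1 else 0) + (if z = w \<otimes> star u then \<sigma> u else 0))"
proof -
  have "gr_mult G (gr_basis G w \<beta>) (s u) z = \<beta> * s u (inv w \<otimes> z)"
    using assms by (simp add: mult_basis)
  then show ?thesis using assms by (simp add: s_def gr_basis_def eqinv)
qed

lemma E_ss: "u \<in> carrier G \<Longrightarrow> v \<in> carrier G \<Longrightarrow> star u \<noteq> u \<Longrightarrow> star v \<noteq> v \<Longrightarrow>
   gr_mult G (s u) (s v) z + gr_mult G (s v) (s u) z = 0"
  by (intro AC s_in) auto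

lemma F1:
  assumes u: "u \<in> carrier G" "star u \<noteq> u"
  shows "u \<otimes> star u = star u \<otimes> u" "star u \<otimes> star u = u \<otimes> u" "(4::'r) = 0"
proof -
  have su: "star u \<in> carrier G" using u by simp
  have n1: "u \<otimes> star u \<noteq> u \<otimes> u" using u su by simp
  have n2: "u \<otimes> star u \<noteq> star u \<otimes> star u" using u su by simp
  have E: "gr_mult G (s u) (s u) (u \<otimes> star u) + gr_mult G (s u) (s u) (u \<otimes> star u) = 0"
    using E_ss[OF u(1) u(1) u(2) u(2)] .
  have X: "gr_mult G (s u) (s u) (u \<otimes> star u) = \<sigma> u + \<sigma> u * (if u \<otimes> star u = star u \<otimes> u then 1 else 0)"
    using prod_ss[OF u(1) u(1) u(2) u(2), of "u \<otimes> star u"] u su n1 n2 by simp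
  show c: "u \<otimes> star u = star u \<otimes> u"
  proof (rule ccontr)
    assume "\<not> ?thesis"
    then have "\<sigma> u + \<sigma> u = 0" using E X by simp
    then have "2 * \<sigma> u = 0" by (metis mult_2)
    then show False using unit_cancel[OF u(1), of 2] two by blast
  qed
  have X': "gr_mult G (s u) (s u) (u \<otimes> star u) = \<sigma> u + \<sigma> u" using X c by simp
  have h: "(\<sigma> u + \<sigma> u) + (\<sigma> u + \<sigma> u) = 0" using E unfolding X' .
  have "(4::'r) * \<sigma> u = 2 * (2 * \<sigma> u)" by simp
  also have "\<dots> = (\<sigma> u + \<sigma> u) + (\<sigma> u + \<sigma> u)" by (simp only: mult_2)
  finally have "4 * \<sigma> u = 0" using h by simp
  then show four: "(4::'r) = 0" using unit_cancel[OF u(1), of 4] by simp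
  have n3: "u \<otimes> u \<noteq> u \<otimes> star u" using n1 by metis
  have n4: "u \<otimes> u \<noteq> star u \<otimes> u" using u su by simp
  have E2: "gr_mult G (s u) (s u) (u \<otimes> u) + gr_mult G (s u) (s u) (u \<otimes> u) = 0"
    using E_ss[OF u(1) u(1) u(2) u(2)] .
  have X2: "gr_mult G (s u) (s u) (u \<otimes> u) = 1 + \<sigma> u * (if u \<otimes> u = star u \<otimes> star u then \<sigma> u else 0)"
    using prod_ss[OF u(1) u(1) u(2) u(2), of "u \<otimes> u"] u su n3 n4 by simp
  show "star u \<otimes> star u = u \<otimes> u"
  proof (rule ccontr)
    assume "\<not> ?thesis"
    then have "u \<otimes> u \<noteq> star u \<otimes> star u" by metis
    then have "1 + 1 = (0::'r)" using E2 X2 by simp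
    then have "(2::'r) = 0" by simp
    then show False using two by simp
  qed
qed

lemma L:
  assumes u: "u \<in> carrier G" "star u \<noteq> u" and v: "v \<in> carrier G" "star v \<noteq> v"
    and nc: "u \<otimes> v \<noteq> v \<otimes> u"
  shows "u \<otimes> v = star u \<otimes> star v \<or> u \<otimes> v = v \<otimes> star u \<or> u \<otimes> v = star v \<otimes> u"
proof (rule ccontr)
  assume "\<not> ?thesis"
  then have a1: "u \<otimes> v \<noteq> star u \<otimes> star v" and a2: "u \<otimes> v \<noteq> v \<otimes> star u"
    and a3: "u \<otimes> v \<noteq> star v \<otimes> u" by auto
  have su: "star u \<in> carrier G" and sv: "star v \<in> carrier G" using u v by auto
  have b1: "u \<otimes> v \<noteq> u \<otimes> star v" using u v sv by simp
  have b2: "u \<otimes> v \<noteq> star u \<otimes> v" using u v su by simp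
  have E: "gr_mult G (s u) (s v) (u \<otimes> v) + gr_mult G (s v) (s u) (u \<otimes> v) = 0"
    using E_ss[OF u(1) v(1) u(2) v(2)] .
  have X1: "gr_mult G (s u) (s v) (u \<otimes> v) = 1"
    using prod_ss[OF u(1) v(1) u(2) v(2), of "u \<otimes> v"] u v su sv a1 b1 b2 by simp
  have X2: "gr_mult G (s v) (s u) (u \<otimes> v) = \<sigma> v * (if u \<otimes> v = star v \<otimes> star u then \<sigma> u else 0)"
    using prod_ss[OF v(1) u(1) v(2) u(2), of "u \<otimes> v"] u v su sv a2 a3 nc by simp
  have w: "u \<otimes> v = star v \<otimes> star u"
  proof (rule ccontr)
    assume "\<not> ?thesis"
    then have "(1::'r) = 0" using E X1 X2 by simp
    then show False using one_nz by simp
  qed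
  have sw: "1 + \<sigma> u * \<sigma> v = 0" using E X1 X2 w by (simp add: mult.commute)
  define ww where "ww = u \<otimes> v"
  have wc: "ww \<in> carrier G" using u v ww_def by simp
  have ws: "star ww = ww" using w u v by (simp add: ww_def star_mult)
  have sigw: "\<sigma> ww = - 1" using sw u v by (simp add: ww_def sig_mult eq_neg_iff_add_eq_0 add.commute)
  have sig1: "\<sigma> ww \<noteq> 1"
  proof
    assume "\<sigma> ww = 1"
    then have "(1::'r) + 1 = 0" using sigw by simp
    then show False using two by simp
  qed
  have "2 * (1 - \<sigma> ww) = (4::'r)" using sigw by simp
  then have b0: "2 * (1 - \<sigma> ww) = 0" using F1(3)[OF u] by simp
  have bin: "gr_basis G ww 2 \<in> S_mod G star \<sigma>" by (rule b_in[OF wc ws sig1 b0])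
  have E2: "gr_mult G (s u) (gr_basis G ww 2) (u \<otimes> ww) + gr_mult G (gr_basis G ww 2) (s u) (u \<otimes> ww) = 0"
    by (rule AC[OF s_in[OF u] bin])
  have c1: "u \<otimes> ww \<noteq> star u \<otimes> ww" using u su wc by simp
  have c2: "u \<otimes> ww \<noteq> ww \<otimes> u"
  proof
    assume "u \<otimes> ww = ww \<otimes> u"
    then have "u \<otimes> (u \<otimes> v) = u \<otimes> (v \<otimes> u)" using u v by (simp add: ww_def m_assoc)
    then show False using nc u v by simp
  qed
  have c3: "u \<otimes> ww \<noteq> ww \<otimes> star u"
  proof
    assume "u \<otimes> ww = ww \<otimes> star u"
    then have "u \<otimes> (u \<otimes> v) = u \<otimes> (v \<otimes> star u)" using u v su by (simp add: ww_def m_assoc)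
    then show False using a2 u v su by simp
  qed
  have Y1: "gr_mult G (s u) (gr_basis G ww 2) (u \<otimes> ww) = 2"
    using prod_sb[OF u(1) wc u(2), of "u \<otimes> ww" 2] u wc c1 by simp
  have Y2: "gr_mult G (gr_basis G ww 2) (s u) (u \<otimes> ww) = 0"
    using prod_bs[OF u(1) wc, of "u \<otimes> ww" 2] u wc c2 c3 by simp
  show False using E2 Y1 Y2 two by simp
qed

lemma assoc_sub: "a \<in> carrier G \<Longrightarrow> b \<in> carrier G \<Longrightarrow> c \<in> carrier G \<Longrightarrow> d \<in> carrier G \<Longrightarrow> t \<in> carrier G
   \<Longrightarrow> a \<otimes> b = c \<otimes> d \<Longrightarrow> a \<otimes> (b \<otimes> t) = c \<otimes> (d \<otimes> t)"
  by (metis m_assoc)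

lemma comm_case:
  assumes x: "x \<in> carrier G" "star x \<noteq> x" and y: "y \<in> carrier G" "star y = y"
    and xy: "star (x \<otimes> y) \<noteq> x \<otimes> y"
  shows "x \<otimes> y = y \<otimes> x"
proof (rule ccontr)
  assume nc: "x \<otimes> y \<noteq> y \<otimes> x"
  define x' where "x' = star x"
  have x'c: "x' \<in> carrier G" using x x'_def by simp
  have sxy: "star (x \<otimes> y) = y \<otimes> x'" using x y by (simp add: star_mult x'_def)
  have xyc: "x \<otimes> y \<in> carrier G" using x y by simp
  have nx: "x' \<noteq> x" using x x'_def by simp
  have f1: "x \<otimes> x' = x' \<otimes> x" using F1(1)[OF x] x'_def by simp
  have f2: "x' \<otimes> x' = x \<otimes> x" using F1(2)[OF x] x'_def by simp
  have nc1: "x \<otimes> (x \<otimes> y) \<noteq> (x \<otimes> y) \<otimes> x"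
  proof
    assume "x \<otimes> (x \<otimes> y) = (x \<otimes> y) \<otimes> x"
    then have "x \<otimes> (x \<otimes> y) = x \<otimes> (y \<otimes> x)" using x y by (simp add: m_assoc)
    then show False using nc x y by simp
  qed
  have L1: "x \<otimes> (x \<otimes> y) = x' \<otimes> (y \<otimes> x') \<or> x \<otimes> (x \<otimes> y) = (x \<otimes> y) \<otimes> x'
      \<or> x \<otimes> (x \<otimes> y) = (y \<otimes> x') \<otimes> x"
    using L[OF x xyc xy nc1] sxy x'_def by simp
  have L2: "(x \<otimes> y) \<otimes> x = (y \<otimes> x') \<otimes> x' \<or> (x \<otimes> y) \<otimes> x = x \<otimes> (y \<otimes> x')
      \<or> (x \<otimes> y) \<otimes> x = x' \<otimes> (x \<otimes> y)"
    using L[OF xyc xy x] nc1 sxy x'_def by metis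
  have B: "y \<otimes> x = x' \<otimes> y"
  proof -
    { assume h: "(x \<otimes> y) \<otimes> x = (y \<otimes> x') \<otimes> x'"
      have "(y \<otimes> x') \<otimes> x' = (y \<otimes> x) \<otimes> x" using f2 x y x'c by (simp add: m_assoc)
      then have "x \<otimes> y = y \<otimes> x" using h x y by simp
      with nc have False by simp }
    moreover
    { assume h: "(x \<otimes> y) \<otimes> x = x \<otimes> (y \<otimes> x')"
      then have "x \<otimes> (y \<otimes> x) = x \<otimes> (y \<otimes> x')" using x y by (simp add: m_assoc)
      then have False using x y x'c nx by simp }
    moreover
    { assume h: "(x \<otimes> y) \<otimes> x = x' \<otimes> (x \<otimes> y)"
      have "x' \<otimes> (x \<otimes> y) = x \<otimes> (x' \<otimes> y)" using assoc_sub[OF x'c x(1) x(1) x'c y(1) f1[symmetric]] .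
      then have "x \<otimes> (y \<otimes> x) = x \<otimes> (x' \<otimes> y)" using h x y by (simp add: m_assoc)
      then have ?thesis using x y x'c by simp }
    ultimately show ?thesis using L2 by blast
  qed
  have xx: "(x \<otimes> x) \<otimes> y = (y \<otimes> x) \<otimes> x"
  proof -
    have "(x \<otimes> x) \<otimes> y = (x' \<otimes> x') \<otimes> y" using f2 by simp
    also have "\<dots> = x' \<otimes> (x' \<otimes> y)" using x'c y by (simp add: m_assoc)
    also have "\<dots> = x' \<otimes> (y \<otimes> x)" using B by simp
    also have "\<dots> = (x' \<otimes> y) \<otimes> x" using x'c y x by (simp add: m_assoc)
    also have "\<dots> = (y \<otimes> x) \<otimes> x" using B by simp
    finally show ?thesis .
  qed
  { assume h: "x \<otimes> (x \<otimes> y) = x' \<otimes> (y \<otimes> x')"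
    have "x' \<otimes> (y \<otimes> x') = (y \<otimes> x) \<otimes> x'" using B x'c y by (simp add: m_assoc[symmetric])
    then have "y \<otimes> (x \<otimes> x) = y \<otimes> (x \<otimes> x')" using h xx x y x'c by (simp add: m_assoc)
    then have False using x y x'c nx by simp }
  moreover
  { assume h: "x \<otimes> (x \<otimes> y) = (x \<otimes> y) \<otimes> x'"
    then have "x \<otimes> (x \<otimes> y) = x \<otimes> (y \<otimes> x')" using x y x'c by (simp add: m_assoc)
    then have "x \<otimes> y = y \<otimes> x'" using x y x'c by simp
    then have False using xy sxy by simp }
  moreover
  { assume h: "x \<otimes> (x \<otimes> y) = (y \<otimes> x') \<otimes> x"
    then have "y \<otimes> (x \<otimes> x) = y \<otimes> (x \<otimes> x')" using xx f1 x y x'c by (simp add: m_assoc)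
    then have False using x y x'c nx by simp }
  ultimately show False using L1 by blast
qed

lemma commg_one: "a \<in> carrier G \<Longrightarrow> b \<in> carrier G \<Longrightarrow> a \<otimes> b = b \<otimes> a \<Longrightarrow> commg G a b = \<one>"
proof -
  assume a: "a \<in> carrier G" and b: "b \<in> carrier G" and c: "a \<otimes> b = b \<otimes> a"
  have "commg G a b = inv a \<otimes> (inv b \<otimes> (a \<otimes> b))" using a b by (simp add: commg_def m_assoc)
  also have "\<dots> = inv a \<otimes> (inv b \<otimes> (b \<otimes> a))" using c by simp
  also have "\<dots> = \<one>" using a b by (simp add: m_assoc[symmetric])
  finally show ?thesis .
qed

lemma key:
  assumes x: "x \<in> carrier G" "star x \<noteq> x" and y: "y \<in> carrier G" "star y = y"
  shows "(x \<otimes> y = y \<otimes> star x \<and> x \<otimes> y \<noteq> y \<otimes> x) \<or> (x \<otimes> y \<noteq> y \<otimes> star x \<and> x \<otimes> y = y \<otimes> x)"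
proof -
  have sxy: "star (x \<otimes> y) = y \<otimes> star x" using x y by (simp add: star_mult)
  show ?thesis
  proof (cases "x \<otimes> y = y \<otimes> star x")
    case True
    have "x \<otimes> y \<noteq> y \<otimes> x"
    proof
      assume "x \<otimes> y = y \<otimes> x"
      then have "y \<otimes> star x = y \<otimes> x" using True by simp
      then show False using x y by simp
    qed
    then show ?thesis using True by simp
  next
    case False
    then have "star (x \<otimes> y) \<noteq> x \<otimes> y" using sxy by simp
    then show ?thesis using comm_case[OF x y] False by simp
  qed
qed

end
theorem lemma3p9:
  fixes G :: "('g, 'm) monoid_scheme" and star :: "'g \<Rightarrow> 'g"
    and \<sigma> :: "'g \<Rightarrow> 'r::comm_ring_1" and x y :: 'g and \<alpha> :: 'r
  assumes grp: "group G"
    and char: "(2::'r) \<noteq> 0"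
    and inv: "involution_on G star"
    and hom: "unit_hom G \<sigma>"
    and nontriv: "\<exists>g\<in>carrier G. \<sigma> g \<noteq> 1"
    and compat: "\<forall>g\<in>carrier G. \<sigma> (g \<otimes>\<^bsub>G\<^esub> star g) = 1"
    and anti: "anticommutative G (S_mod G star \<sigma>)"
    and y: "y \<in> Gstar G star"
    and x: "x \<in> carrier G - Gstar G star"
    and \<alpha>: "gr_basis G y \<alpha> \<in> S_mod G star \<sigma>"
  shows "conjg G x y \<in> {x, star x}
    \<and> ((x \<otimes>\<^bsub>G\<^esub> y \<in> Gstar G star) \<longleftrightarrow> x \<otimes>\<^bsub>G\<^esub> y \<noteq> y \<otimes>\<^bsub>G\<^esub> x)
    \<and> (x \<otimes>\<^bsub>G\<^esub> y \<noteq> y \<otimes>\<^bsub>G\<^esub> x \<longrightarrow> \<alpha> * (1 + \<sigma> x) = 0)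
    \<and> (x \<otimes>\<^bsub>G\<^esub> y = y \<otimes>\<^bsub>G\<^esub> x \<longrightarrow> 2 * \<alpha> = 0)
    \<and> commg G x (y \<otimes>\<^bsub>G\<^esub> y) = \<one>\<^bsub>G\<^esub>
    \<and> commg G (x \<otimes>\<^bsub>G\<^esub> x) y = \<one>\<^bsub>G\<^esub>
    \<and> commg G (x \<otimes>\<^bsub>G\<^esub> star x) y = \<one>\<^bsub>G\<^esub>"
proof -
  interpret ac G star \<sigma> using grp char inv hom anti by (simp add: ac_def ac_axioms_def)
  have xc: "x \<in> carrier G" and xn: "star x \<noteq> x" using x by (auto simp: Gstar_def)
  have yc: "y \<in> carrier G" and ys: "star y = y" using y by (auto simp: Gstar_def)
  define x' where "x' = star x"
  have x'c: "x' \<in> carrier G" using xc x'_def by simp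
  have nx: "x' \<noteq> x" using xn x'_def by simp
  have x'n: "star x' \<noteq> x'" using xc xn x'_def by auto
  have sx': "star x' = x" using xc x'_def by simp
  have xyc: "x \<otimes>\<^bsub>G\<^esub> y \<in> carrier G" using xc yc by simp
  have sxy: "star (x \<otimes>\<^bsub>G\<^esub> y) = y \<otimes>\<^bsub>G\<^esub> x'" using xc yc ys by (simp add: star_mult x'_def)
  have Gs: "(x \<otimes>\<^bsub>G\<^esub> y \<in> Gstar G star) = (x \<otimes>\<^bsub>G\<^esub> y = y \<otimes>\<^bsub>G\<^esub> x')"
    using sxy xyc by (auto simp: Gstar_def)
  have K: "(x \<otimes>\<^bsub>G\<^esub> y = y \<otimes>\<^bsub>G\<^esub> x' \<and> x \<otimes>\<^bsub>G\<^esub> y \<noteq> y \<otimes>\<^bsub>G\<^esub> x) \<or> (x \<otimes>\<^bsub>G\<^esub> y \<noteq> y \<otimes>\<^bsub>G\<^esub> x' \<and> x \<otimes>\<^bsub>G\<^esub> y = y \<otimes>\<^bsub>G\<^esub> x)"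
    using key[OF xc xn yc ys] x'_def by simp
  have F: "x \<otimes>\<^bsub>G\<^esub> x' = x' \<otimes>\<^bsub>G\<^esub> x" "x' \<otimes>\<^bsub>G\<^esub> x' = x \<otimes>\<^bsub>G\<^esub> x" using F1[OF xc xn] x'_def by auto
  have Sx: "s x \<in> S_mod G star \<sigma>" using s_in[OF xc xn] .
  have EA: "gr_mult G (s x) (gr_basis G y \<alpha>) (x \<otimes>\<^bsub>G\<^esub> y) + gr_mult G (gr_basis G y \<alpha>) (s x) (x \<otimes>\<^bsub>G\<^esub> y) = 0"
    using AC[OF Sx \<alpha>] .
  have P1: "gr_mult G (s x) (gr_basis G y \<alpha>) (x \<otimes>\<^bsub>G\<^esub> y) = \<alpha>"
  proof -
    have "x \<otimes>\<^bsub>G\<^esub> y \<noteq> star x \<otimes>\<^bsub>G\<^esub> y" using xc yc xn by simp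
    then show ?thesis using prod_sb[OF xc yc xn, of "x \<otimes>\<^bsub>G\<^esub> y" \<alpha>] xyc by simp
  qed
  have P2: "gr_mult G (gr_basis G y \<alpha>) (s x) (x \<otimes>\<^bsub>G\<^esub> y) = \<alpha> * ((if x \<otimes>\<^bsub>G\<^esub> y = y \<otimes>\<^bsub>G\<^esub> x then 1 else 0) + (if x \<otimes>\<^bsub>G\<^esub> y = y \<otimes>\<^bsub>G\<^esub> x' then \<sigma> x else 0))"
    using prod_bs[OF xc yc xyc, of \<alpha>] x'_def by simp
  show ?thesis
  proof (cases "x \<otimes>\<^bsub>G\<^esub> y = y \<otimes>\<^bsub>G\<^esub> x")
    case True
    then have ne: "x \<otimes>\<^bsub>G\<^esub> y \<noteq> y \<otimes>\<^bsub>G\<^esub> x'" using K by blast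
    have c1: "conjg G x y \<in> {x, star x}"
    proof -
      have "conjg G x y = inv\<^bsub>G\<^esub> y \<otimes>\<^bsub>G\<^esub> (x \<otimes>\<^bsub>G\<^esub> y)" using xc yc by (simp add: conjg_def m_assoc)
      also have "\<dots> = inv\<^bsub>G\<^esub> y \<otimes>\<^bsub>G\<^esub> (y \<otimes>\<^bsub>G\<^esub> x)" using True by simp
      also have "\<dots> = x" using xc yc by (simp add: m_assoc[symmetric])
      finally show ?thesis by simp
    qed
    have "\<alpha> + \<alpha> = 0" using EA P1 P2 True ne by simp
    then have c3: "2 * \<alpha> = 0" by (metis mult_2)
    have yy: "x \<otimes>\<^bsub>G\<^esub> (y \<otimes>\<^bsub>G\<^esub> y) = (y \<otimes>\<^bsub>G\<^esub> y) \<otimes>\<^bsub>G\<^esub> x"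
      using True xc yc by (metis m_assoc)
    have xx: "(x \<otimes>\<^bsub>G\<^esub> x) \<otimes>\<^bsub>G\<^esub> y = y \<otimes>\<^bsub>G\<^esub> (x \<otimes>\<^bsub>G\<^esub> x)"
      using True xc yc by (metis m_assoc)
    have xx': "(x \<otimes>\<^bsub>G\<^esub> star x) \<otimes>\<^bsub>G\<^esub> y = y \<otimes>\<^bsub>G\<^esub> (x \<otimes>\<^bsub>G\<^esub> star x)"
    proof -
      have K2: "(x' \<otimes>\<^bsub>G\<^esub> y = y \<otimes>\<^bsub>G\<^esub> x \<and> x' \<otimes>\<^bsub>G\<^esub> y \<noteq> y \<otimes>\<^bsub>G\<^esub> x') \<or> (x' \<otimes>\<^bsub>G\<^esub> y \<noteq> y \<otimes>\<^bsub>G\<^esub> x \<and> x' \<otimes>\<^bsub>G\<^esub> y = y \<otimes>\<^bsub>G\<^esub> x')"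
        using key[OF x'c x'n yc ys] sx' by simp
      have "x' \<otimes>\<^bsub>G\<^esub> y = y \<otimes>\<^bsub>G\<^esub> x'"
      proof (rule ccontr)
        assume "x' \<otimes>\<^bsub>G\<^esub> y \<noteq> y \<otimes>\<^bsub>G\<^esub> x'"
        then have "x' \<otimes>\<^bsub>G\<^esub> y = y \<otimes>\<^bsub>G\<^esub> x" using K2 by blast
        then have "x' \<otimes>\<^bsub>G\<^esub> y = x \<otimes>\<^bsub>G\<^esub> y" using True by simp
        then show False using nx x'c xc yc by simp
      qed
      then show ?thesis using True xc yc x'c x'_def by (metis m_assoc)
    qed
    show ?thesis using c1 Gs ne True c3 commg_one yy xx xx' xc yc by auto
  next
    case False
    then have h1: "x \<otimes>\<^bsub>G\<^esub> y = y \<otimes>\<^bsub>G\<^esub> x'" using K by blast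
    have K2: "(x' \<otimes>\<^bsub>G\<^esub> y = y \<otimes>\<^bsub>G\<^esub> x \<and> x' \<otimes>\<^bsub>G\<^esub> y \<noteq> y \<otimes>\<^bsub>G\<^esub> x') \<or> (x' \<otimes>\<^bsub>G\<^esub> y \<noteq> y \<otimes>\<^bsub>G\<^esub> x \<and> x' \<otimes>\<^bsub>G\<^esub> y = y \<otimes>\<^bsub>G\<^esub> x')"
      using key[OF x'c x'n yc ys] sx' by simp
    have h2: "x' \<otimes>\<^bsub>G\<^esub> y = y \<otimes>\<^bsub>G\<^esub> x"
    proof (rule ccontr)
      assume "x' \<otimes>\<^bsub>G\<^esub> y \<noteq> y \<otimes>\<^bsub>G\<^esub> x"
      then have "x' \<otimes>\<^bsub>G\<^esub> y = y \<otimes>\<^bsub>G\<^esub> x'" using K2 by blast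
      then have "x' \<otimes>\<^bsub>G\<^esub> y = x \<otimes>\<^bsub>G\<^esub> y" using h1 by simp
      then show False using nx x'c xc yc by simp
    qed
    have c1: "conjg G x y \<in> {x, star x}"
    proof -
      have "conjg G x y = inv\<^bsub>G\<^esub> y \<otimes>\<^bsub>G\<^esub> (x \<otimes>\<^bsub>G\<^esub> y)" using xc yc by (simp add: conjg_def m_assoc)
      also have "\<dots> = inv\<^bsub>G\<^esub> y \<otimes>\<^bsub>G\<^esub> (y \<otimes>\<^bsub>G\<^esub> x')" using h1 by simp
      also have "\<dots> = x'" using x'c yc by (simp add: m_assoc[symmetric])
      finally show ?thesis using x'_def by simp
    qed
    have "\<alpha> + \<alpha> * \<sigma> x = 0" using EA P1 P2 False h1 by simp
    then have c3: "\<alpha> * (1 + \<sigma> x) = 0" by (simp add: distrib_left)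
    have yy: "x \<otimes>\<^bsub>G\<^esub> (y \<otimes>\<^bsub>G\<^esub> y) = (y \<otimes>\<^bsub>G\<^esub> y) \<otimes>\<^bsub>G\<^esub> x"
    proof -
      have "x \<otimes>\<^bsub>G\<^esub> (y \<otimes>\<^bsub>G\<^esub> y) = (x \<otimes>\<^bsub>G\<^esub> y) \<otimes>\<^bsub>G\<^esub> y" using xc yc by (simp add: m_assoc)
      also have "\<dots> = (y \<otimes>\<^bsub>G\<^esub> x') \<otimes>\<^bsub>G\<^esub> y" using h1 by simp
      also have "\<dots> = y \<otimes>\<^bsub>G\<^esub> (x' \<otimes>\<^bsub>G\<^esub> y)" using x'c yc by (simp add: m_assoc)
      also have "\<dots> = y \<otimes>\<^bsub>G\<^esub> (y \<otimes>\<^bsub>G\<^esub> x)" using h2 by simp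
      also have "\<dots> = (y \<otimes>\<^bsub>G\<^esub> y) \<otimes>\<^bsub>G\<^esub> x" using xc yc by (simp add: m_assoc)
      finally show ?thesis .
    qed
    have xx: "(x \<otimes>\<^bsub>G\<^esub> x) \<otimes>\<^bsub>G\<^esub> y = y \<otimes>\<^bsub>G\<^esub> (x \<otimes>\<^bsub>G\<^esub> x)"
    proof -
      have "(x \<otimes>\<^bsub>G\<^esub> x) \<otimes>\<^bsub>G\<^esub> y = x \<otimes>\<^bsub>G\<^esub> (x \<otimes>\<^bsub>G\<^esub> y)" using xc yc by (simp add: m_assoc)
      also have "\<dots> = x \<otimes>\<^bsub>G\<^esub> (y \<otimes>\<^bsub>G\<^esub> x')" using h1 by simp
      also have "\<dots> = (x \<otimes>\<^bsub>G\<^esub> y) \<otimes>\<^bsub>G\<^esub> x'" using xc yc x'c by (simp add: m_assoc)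
      also have "\<dots> = (y \<otimes>\<^bsub>G\<^esub> x') \<otimes>\<^bsub>G\<^esub> x'" using h1 by simp
      also have "\<dots> = y \<otimes>\<^bsub>G\<^esub> (x' \<otimes>\<^bsub>G\<^esub> x')" using x'c yc by (simp add: m_assoc)
      also have "\<dots> = y \<otimes>\<^bsub>G\<^esub> (x \<otimes>\<^bsub>G\<^esub> x)" using F by simp
      finally show ?thesis .
    qed
    have xx': "(x \<otimes>\<^bsub>G\<^esub> x') \<otimes>\<^bsub>G\<^esub> y = y \<otimes>\<^bsub>G\<^esub> (x \<otimes>\<^bsub>G\<^esub> x')"
    proof -
      have "(x \<otimes>\<^bsub>G\<^esub> x') \<otimes>\<^bsub>G\<^esub> y = x \<otimes>\<^bsub>G\<^esub> (x' \<otimes>\<^bsub>G\<^esub> y)" using xc yc x'c by (simp add: m_assoc)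
      also have "\<dots> = x \<otimes>\<^bsub>G\<^esub> (y \<otimes>\<^bsub>G\<^esub> x)" using h2 by simp
      also have "\<dots> = (x \<otimes>\<^bsub>G\<^esub> y) \<otimes>\<^bsub>G\<^esub> x" using xc yc by (simp add: m_assoc)
      also have "\<dots> = (y \<otimes>\<^bsub>G\<^esub> x') \<otimes>\<^bsub>G\<^esub> x" using h1 by simp
      also have "\<dots> = y \<otimes>\<^bsub>G\<^esub> (x' \<otimes>\<^bsub>G\<^esub> x)" using x'c yc xc by (simp add: m_assoc)
      also have "\<dots> = y \<otimes>\<^bsub>G\<^esub> (x \<otimes>\<^bsub>G\<^esub> x')" using F by simp
      finally show ?thesis .
    qed
    have g1: "commg G x (y \<otimes>\<^bsub>G\<^esub> y) = \<one>\<^bsub>G\<^esub>" using commg_one[OF xc _ yy] yc by simp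
    have g2: "commg G (x \<otimes>\<^bsub>G\<^esub> x) y = \<one>\<^bsub>G\<^esub>" using commg_one[OF _ yc xx] xc by simp
    have g3: "commg G (x \<otimes>\<^bsub>G\<^esub> star x) y = \<one>\<^bsub>G\<^esub>" using commg_one[OF _ yc xx'] xc x'c x'_def by simp
    show ?thesis using c1 Gs h1 False c3 g1 g2 g3 by simp
  qed
qed


end
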